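(* Let $(E,f)$ be a polymatroid that admits a tensor product with the uniform matroid $U_{2,3}$. Then $(E,f)$ is $1$-CI; that is, for every pair $(X,Y)$ of subsets of $E$ there exist a finite set $Z$ with $Z\cap E=\emptyset$ and a polymatroid $(E\cup Z, h)$ with $h(S)=f(S)$ for all $S\subseteq E$, such that $h(Z)=f(X)+f(Y)-f(X\cup Y)$, $h(X\cup Z)=h(X)$ and $h(Y\cup Z)=h(Y)$.
   Context: A polymatroid $(E,f)$ consists of a finite ground set $E$ and a function $f\colon 2^E\to\mathbb{R}$ with $f(\emptyset)=0$ that is monotone ($S\subseteq T\Rightarrow f(S)\le f(T)$) and submodular ($f(S)+f(T)\ge f(S\cup T)+f(S\cap T)$). The uniform matroid $U_{2,3}$ is the polymatroid on $\{1,2,3\}$ with rank function $r(T)=\min\{|T|,2\}$. A tensor product of polymatroids $(E_1,f_1)$ and $(E_2,f_2)$ is a polymatroid $(E_1\times E_2,g)$ such that $g(S\times T)=f_1(S)f_2(T)$ for all $S\subseteq E_1$, $T\subseteq E_2$. An extension $(E\cup Z,h)$ of $(E,f)$ (with $Z\cap E=\emptyset$) in which $h(Z)=f(X)+f(Y)-f(X\cup Y)$ and $h(X\cup Z)=h(X)$, $h(Y\cup Z)=h(Y)$ is called a common information extension for the pair $(X,Y)$. A polymatroid is called $1$-CI if it admits a common information extension for every pair of subsets of its ground set. *)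

theory Defs
  imports Complex_Main
begin

text \<open>A polymatroid (E,f): finite ground set E, f defined on subsets of E
  (values of f outside Pow E are irrelevant), normalized, monotone, submodular.\<close>
definition polymatroid :: "'a set \<Rightarrow> ('a set \<Rightarrow> real) \<Rightarrow> bool" where
  "polymatroid E f \<longleftrightarrow> finite E \<and> f {} = 0
     \<and> (\<forall>S T. S \<subseteq> T \<and> T \<subseteq> E \<longrightarrow> f S \<le> f T)
     \<and> (\<forall>S T. S \<subseteq> E \<and> T \<subseteq> E \<longrightarrow> f S + f T \<ge> f (S \<union> T) + f (S \<inter> T))"

definition U23_ground :: "nat set" where "U23_ground = {1,2,3}"
definition U23_rank :: "nat set \<Rightarrow> real" where "U23_rank T = real (min (card T) 2)"

definition is_tensor_product ::
  "'a set \<Rightarrow> ('a set \<Rightarrow> real) \<Rightarrow> 'b set \<Rightarrow> ('b set \<Rightarrow> real) \<Rightarrow> (('a \<times> 'b) set \<Rightarrow> real) \<Rightarrow> bool" where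
  "is_tensor_product E1 f1 E2 f2 g \<longleftrightarrow> polymatroid (E1 \<times> E2) g
     \<and> (\<forall>S T. S \<subseteq> E1 \<and> T \<subseteq> E2 \<longrightarrow> g (S \<times> T) = f1 S * f2 T)"

definition admits_tensor_product ::
  "'a set \<Rightarrow> ('a set \<Rightarrow> real) \<Rightarrow> 'b set \<Rightarrow> ('b set \<Rightarrow> real) \<Rightarrow> bool" where
  "admits_tensor_product E1 f1 E2 f2 \<longleftrightarrow> (\<exists>g. is_tensor_product E1 f1 E2 f2 g)"

text \<open>Common information extension for (X,Y).  The new ground set is the disjoint
  union of E (tagged Inl) and a finite set Z (tagged Inr, elements drawn from nat).\<close>
definition CI_extension :: "'a set \<Rightarrow> ('a set \<Rightarrow> real) \<Rightarrow> 'a set \<Rightarrow> 'a set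
     \<Rightarrow> nat set \<Rightarrow> (('a + nat) set \<Rightarrow> real) \<Rightarrow> bool" where
  "CI_extension E f X Y Z h \<longleftrightarrow> finite Z
     \<and> polymatroid (Inl ` E \<union> Inr ` Z) h
     \<and> (\<forall>S. S \<subseteq> E \<longrightarrow> h (Inl ` S) = f S)
     \<and> h (Inr ` Z) = f X + f Y - f (X \<union> Y)
     \<and> h (Inl ` X \<union> Inr ` Z) = h (Inl ` X)
     \<and> h (Inl ` Y \<union> Inr ` Z) = h (Inl ` Y)"

definition one_CI :: "'a set \<Rightarrow> ('a set \<Rightarrow> real) \<Rightarrow> bool" where
  "one_CI E f \<longleftrightarrow> (\<forall>X Y. X \<subseteq> E \<and> Y \<subseteq> E \<longrightarrow> (\<exists>Z h. CI_extension E f X Y Z h))"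

end

theory Submission
  imports Defs
begin

locale tpctx =
  fixes E :: "'a set" and f :: "'a set \<Rightarrow> real" and g :: "('a \<times> nat) set \<Rightarrow> real"
  assumes pf: "polymatroid E f"
    and tg: "is_tensor_product E f U23_ground U23_rank g"
begin

lemma pg: "polymatroid (E \<times> {1,2,3}) g"
  using tg unfolding is_tensor_product_def U23_ground_def by simp

lemma gprod: "S \<subseteq> E \<Longrightarrow> T \<subseteq> {1,2,3} \<Longrightarrow> g (S \<times> T) = f S * real (min (card T) 2)"
  using tg unfolding is_tensor_product_def U23_ground_def U23_rank_def by simp

lemma g1: "S \<subseteq> E \<Longrightarrow> i \<in> {1,2,3} \<Longrightarrow> g (S \<times> {i}) = f S"
  using gprod[of S "{i}"] by simp

lemma g2: "S \<subseteq> E \<Longrightarrow> i \<in> {1,2,3} \<Longrightarrow> j \<in> {1,2,3} \<Longrightarrow> i \<noteq> j \<Longrightarrow> g (S \<times> {i,j}) = 2 * f S"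
  using gprod[of S "{i,j}"] by simp

lemma g3: "S \<subseteq> E \<Longrightarrow> g (S \<times> {1,2,3}) = 2 * f S"
  using gprod[of S "{1,2,3}"] by simp

lemma gempty: "g {} = 0"
  using pg unfolding polymatroid_def by simp

lemma gmono: "S \<subseteq> T \<Longrightarrow> T \<subseteq> E \<times> {1,2,3} \<Longrightarrow> g S \<le> g T"
  using pg unfolding polymatroid_def by blast

lemma gsub: "S \<subseteq> E \<times> {1,2,3} \<Longrightarrow> T \<subseteq> E \<times> {1,2,3} \<Longrightarrow> g (S \<union> T) + g (S \<inter> T) \<le> g S + g T"
  using pg unfolding polymatroid_def by blast

lemma clos:
  assumes "P \<subseteq> R" "R \<subseteq> E \<times> {1,2,3}" "Q \<subseteq> E \<times> {1,2,3}" "g (P \<union> Q) = g P"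
  shows "g (R \<union> Q) = g R"
proof -
  have "R \<union> (P \<union> Q) = R \<union> Q" using assms by auto
  moreover have "g (R \<union> (P \<union> Q)) + g (R \<inter> (P \<union> Q)) \<le> g R + g (P \<union> Q)"
    using assms by (intro gsub) auto
  ultimately have a: "g (R \<union> Q) + g (R \<inter> (P \<union> Q)) \<le> g R + g P" using assms by simp
  moreover have "g P \<le> g (R \<inter> (P \<union> Q))" using assms by (intro gmono) auto
  moreover have "g R \<le> g (R \<union> Q)" using assms by (intro gmono) auto
  ultimately show ?thesis by linarith
qed

lemma L1:
  assumes "S \<subseteq> T" "T \<subseteq> E" "i \<in> {1,2,3}" "j \<in> {1,2,3}" "i \<noteq> j"
  shows "g (S \<times> {i} \<union> T \<times> {j}) = f S + f T"
proof -
  have a: "g (S \<times> {i} \<union> T \<times> {j}) + g (S \<times> {i} \<inter> T \<times> {j}) \<le> g (S \<times> {i}) + g (T \<times> {j})"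
    using assms by (intro gsub) auto
  have "S \<times> {i} \<inter> T \<times> {j} = {}" using assms by auto
  moreover have "g (S \<times> {i}) = f S" using assms by (intro g1) auto
  moreover have "g (T \<times> {j}) = f T" using assms by (intro g1) auto
  ultimately have up: "g (S \<times> {i} \<union> T \<times> {j}) \<le> f S + f T"
    using a gempty by simp
  have b: "g ((S \<times> {i} \<union> T \<times> {j}) \<union> T \<times> {i}) + g ((S \<times> {i} \<union> T \<times> {j}) \<inter> T \<times> {i})
      \<le> g (S \<times> {i} \<union> T \<times> {j}) + g (T \<times> {i})"
    using assms by (intro gsub) auto
  have "(S \<times> {i} \<union> T \<times> {j}) \<union> T \<times> {i} = T \<times> {i,j}" using assms by auto
  moreover have "(S \<times> {i} \<union> T \<times> {j}) \<inter> T \<times> {i} = S \<times> {i}" using assms by auto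
  moreover have "g (T \<times> {i,j}) = 2 * f T" using assms by (intro g2) auto
  moreover have "g (S \<times> {i}) = f S" using assms by (intro g1) auto
  moreover have "g (T \<times> {i}) = f T" using assms by (intro g1) auto
  ultimately have "2 * f T + f S \<le> g (S \<times> {i} \<union> T \<times> {j}) + f T"
    using b by simp
  with up show ?thesis by linarith
qed

lemma L2:
  assumes "S \<subseteq> E" "T \<subseteq> E" "i \<in> {1,2,3}" "j \<in> {1,2,3}" "i \<noteq> j"
  shows "g (S \<times> {i} \<union> T \<times> {j}) = f S + f T"
proof -
  have a: "g (S \<times> {i} \<union> T \<times> {j}) + g (S \<times> {i} \<inter> T \<times> {j}) \<le> g (S \<times> {i}) + g (T \<times> {j})"
    using assms by (intro gsub) auto
  have "S \<times> {i} \<inter> T \<times> {j} = {}" using assms by auto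
  moreover have "g (S \<times> {i}) = f S" using assms by (intro g1) auto
  moreover have "g (T \<times> {j}) = f T" using assms by (intro g1) auto
  ultimately have up: "g (S \<times> {i} \<union> T \<times> {j}) \<le> f S + f T"
    using a gempty by simp
  have b: "g ((S \<times> {i} \<union> T \<times> {j}) \<union> (S \<union> T) \<times> {j}) + g ((S \<times> {i} \<union> T \<times> {j}) \<inter> (S \<union> T) \<times> {j})
      \<le> g (S \<times> {i} \<union> T \<times> {j}) + g ((S \<union> T) \<times> {j})"
    using assms by (intro gsub) auto
  have "(S \<times> {i} \<union> T \<times> {j}) \<union> (S \<union> T) \<times> {j} = S \<times> {i} \<union> (S \<union> T) \<times> {j}" by auto
  moreover have "(S \<times> {i} \<union> T \<times> {j}) \<inter> (S \<union> T) \<times> {j} = T \<times> {j}" using assms by auto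
  moreover have "g (S \<times> {i} \<union> (S \<union> T) \<times> {j}) = f S + f (S \<union> T)"
    using assms by (intro L1) auto
  moreover have "g ((S \<union> T) \<times> {j}) = f (S \<union> T)" using assms by (intro g1) auto
  moreover have "g (T \<times> {j}) = f T" using assms by (intro g1) auto
  ultimately have "f S + f (S \<union> T) + f T \<le> g (S \<times> {i} \<union> T \<times> {j}) + f (S \<union> T)"
    using b by simp
  with up show ?thesis by linarith
qed

lemma add_clos:
  assumes "X \<subseteq> E" "i \<in> {1,2,3}" "j \<in> {1,2,3}" "k \<in> {1,2,3}" "i \<noteq> j" "j \<noteq> k" "i \<noteq> k"
    "X \<times> {i,j} \<subseteq> R" "R \<subseteq> E \<times> {1,2,3}"
  shows "g (R \<union> X \<times> {k}) = g R"
proof (rule clos[of "X \<times> {i,j}"])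
  have "X \<times> {i,j} \<union> X \<times> {k} = X \<times> {1,2,3}" using assms by auto
  then show "g (X \<times> {i,j} \<union> X \<times> {k}) = g (X \<times> {i,j})"
    using assms g2 g3 by simp
qed (use assms in auto)

lemma La:
  assumes "X \<subseteq> E" "Y \<subseteq> E"
  shows "g (X \<times> {3::nat} \<union> (X \<times> {1::nat} \<union> Y \<times> {2::nat})) = f X + f (X \<union> Y)"
proof -
  let ?Rz = "X \<times> {3::nat} \<union> (X \<times> {1::nat} \<union> Y \<times> {2::nat})"
  have 1: "g (?Rz \<union> X \<times> {2::nat}) = g ?Rz"
    by (rule add_clos[of X 1 3 2]) (use assms in auto)
  let ?R = "X \<times> {1::nat} \<union> (X \<union> Y) \<times> {2::nat}"
  have 2: "g (?R \<union> X \<times> {3::nat}) = g ?R"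
    by (rule add_clos[of X 1 2 3]) (use assms in auto)
  have "?Rz \<union> X \<times> {2::nat} = ?R \<union> X \<times> {3::nat}" by blast
  moreover have "g ?R = f X + f (X \<union> Y)" using assms by (intro L1) auto
  ultimately show ?thesis using 1 2 by simp
qed

lemma Lb:
  assumes "X \<subseteq> E" "Y \<subseteq> E"
  shows "g (Y \<times> {3::nat} \<union> (X \<times> {1::nat} \<union> Y \<times> {2::nat})) = f Y + f (X \<union> Y)"
proof -
  let ?Rz = "Y \<times> {3::nat} \<union> (X \<times> {1::nat} \<union> Y \<times> {2::nat})"
  have 1: "g (?Rz \<union> Y \<times> {1::nat}) = g ?Rz"
    by (rule add_clos[of Y 2 3 1]) (use assms in auto)
  let ?R = "(X \<union> Y) \<times> {1::nat} \<union> Y \<times> {2::nat}"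
  have 2: "g (?R \<union> Y \<times> {3::nat}) = g ?R"
    by (rule add_clos[of Y 1 2 3]) (use assms in auto)
  have "?Rz \<union> Y \<times> {1::nat} = ?R \<union> Y \<times> {3::nat}" by blast
  moreover have "g ?R = f Y + f (X \<union> Y)" using assms L1[of Y "X \<union> Y" 2 1] by (simp add: Un_commute)
  ultimately show ?thesis using 1 2 by simp
qed

lemma Lc:
  assumes "X \<subseteq> E" "Y \<subseteq> E"
  shows "g (E \<times> {3::nat} \<union> (X \<times> {1::nat} \<union> Y \<times> {2::nat})) = f E + f (X \<union> Y)"
proof -
  let ?Rz = "E \<times> {3::nat} \<union> (X \<times> {1::nat} \<union> Y \<times> {2::nat})"
  have 1: "g (?Rz \<union> X \<times> {2::nat}) = g ?Rz"
    by (rule add_clos[of X 1 3 2]) (use assms in auto)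
  let ?Ry = "E \<times> {3::nat} \<union> X \<times> {1::nat} \<union> (X \<union> Y) \<times> {2::nat}"
  have 2: "g (?Ry \<union> (X \<union> Y) \<times> {1::nat}) = g ?Ry"
    by (rule add_clos[of "X \<union> Y" 2 3 1]) (use assms in auto)
  let ?R = "E \<times> {3::nat} \<union> (X \<union> Y) \<times> {2::nat}"
  have 3: "g (?R \<union> (X \<union> Y) \<times> {1::nat}) = g ?R"
    by (rule add_clos[of "X \<union> Y" 2 3 1]) (use assms in auto)
  have "?Rz \<union> X \<times> {2::nat} = ?Ry" by blast
  moreover have "?Ry \<union> (X \<union> Y) \<times> {1::nat} = ?R \<union> (X \<union> Y) \<times> {1::nat}" by auto 
  moreover have "g ?R = f (X \<union> Y) + f E" using assms L1[of "X \<union> Y" E 2 3] by (simp add: Un_commute)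
  ultimately show ?thesis using 1 2 3 by simp
qed

definition hh :: "'a set \<Rightarrow> 'a set \<Rightarrow> ('a + nat) set \<Rightarrow> real" where
  "hh X Y S = (if Inr 0 \<in> S then g ((Inl -` S) \<times> {3::nat} \<union> (X \<times> {1::nat} \<union> Y \<times> {2::nat})) - f (X \<union> Y)
     else g ((Inl -` S) \<times> {3::nat}))"

lemma Kmono:
  assumes "X \<subseteq> E" "Y \<subseteq> E" "B \<subseteq> E"
  shows "g (B \<times> {3::nat}) + f (X \<union> Y) \<le> g (B \<times> {3::nat} \<union> (X \<times> {1::nat} \<union> Y \<times> {2::nat}))"
proof -
  let ?C = "X \<times> {1::nat} \<union> Y \<times> {2::nat}"
  have a: "g ((B \<times> {3::nat} \<union> ?C) \<union> E \<times> {3}) + g ((B \<times> {3::nat} \<union> ?C) \<inter> E \<times> {3})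
     \<le> g (B \<times> {3::nat} \<union> ?C) + g (E \<times> {3})"
    using assms by (intro gsub) auto
  have "(B \<times> {3::nat} \<union> ?C) \<union> E \<times> {3} = E \<times> {3} \<union> ?C" using assms by auto
  moreover have "(B \<times> {3::nat} \<union> ?C) \<inter> E \<times> {3} = B \<times> {3}" using assms by auto
  moreover have "g (E \<times> {3::nat}) = f E" by (intro g1) auto
  ultimately show ?thesis using a Lc[OF assms(1,2)] by simp
qed

lemma hpoly:
  assumes "X \<subseteq> E" "Y \<subseteq> E"
  shows "polymatroid (Inl ` E \<union> Inr ` {0}) (hh X Y)"
  unfolding polymatroid_def
proof (intro conjI allI impI)
  let ?C = "X \<times> {1::nat} \<union> Y \<times> {2::nat}"
  have finE: "finite E" using pf unfolding polymatroid_def by simp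
  then show "finite (Inl ` E \<union> Inr ` {0::nat})" by simp
  show "hh X Y {} = 0" unfolding hh_def using gempty by simp
  have C: "?C \<subseteq> E \<times> {1,2,3}" using assms by auto
  fix S T :: "('a + nat) set"
  {
    assume st: "S \<subseteq> T \<and> T \<subseteq> Inl ` E \<union> Inr ` {0}"
    let ?A = "Inl -` S" and ?B = "Inl -` T"
    have AB: "?A \<subseteq> ?B" "?B \<subseteq> E" using st by auto
    have m1: "g (?A \<times> {3::nat}) \<le> g (?B \<times> {3::nat})" using AB by (intro gmono) auto
    have m2: "g (?A \<times> {3::nat} \<union> ?C) \<le> g (?B \<times> {3::nat} \<union> ?C)" using AB C by (intro gmono) auto
    have m3: "g (?B \<times> {3::nat}) + f (X \<union> Y) \<le> g (?B \<times> {3::nat} \<union> ?C)"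
      using Kmono[OF assms AB(2)] .
    show "hh X Y S \<le> hh X Y T" unfolding hh_def using st m1 m2 m3 by auto
  }
  {
    assume st: "S \<subseteq> Inl ` E \<union> Inr ` {0} \<and> T \<subseteq> Inl ` E \<union> Inr ` {0}"
    let ?A = "Inl -` S" and ?B = "Inl -` T"
    have AB: "?A \<subseteq> E" "?B \<subseteq> E" using st by auto
    have s1: "g ((?A \<times> {3::nat} \<union> ?C) \<union> (?B \<times> {3::nat} \<union> ?C)) + g ((?A \<times> {3::nat} \<union> ?C) \<inter> (?B \<times> {3::nat} \<union> ?C))
       \<le> g (?A \<times> {3::nat} \<union> ?C) + g (?B \<times> {3::nat} \<union> ?C)" using AB C by (intro gsub) auto
    have s2: "g ((?A \<times> {3::nat} \<union> ?C) \<union> (?B \<times> {3::nat})) + g ((?A \<times> {3::nat} \<union> ?C) \<inter> (?B \<times> {3::nat}))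
       \<le> g (?A \<times> {3::nat} \<union> ?C) + g (?B \<times> {3::nat})" using AB C by (intro gsub) auto
    have s3: "g ((?A \<times> {3::nat}) \<union> (?B \<times> {3::nat} \<union> ?C)) + g ((?A \<times> {3::nat}) \<inter> (?B \<times> {3::nat} \<union> ?C))
       \<le> g (?A \<times> {3::nat}) + g (?B \<times> {3::nat} \<union> ?C)" using AB C by (intro gsub) auto
    have s4: "g ((?A \<times> {3::nat}) \<union> (?B \<times> {3::nat})) + g ((?A \<times> {3::nat}) \<inter> (?B \<times> {3::nat}))
       \<le> g (?A \<times> {3::nat}) + g (?B \<times> {3::nat})" using AB C by (intro gsub) auto
    have e1: "(?A \<times> {3::nat} \<union> ?C) \<union> (?B \<times> {3::nat} \<union> ?C) = (Inl -` (S \<union> T)) \<times> {3::nat} \<union> ?C" by auto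
    have e2: "(?A \<times> {3::nat} \<union> ?C) \<inter> (?B \<times> {3::nat} \<union> ?C) = (Inl -` (S \<inter> T)) \<times> {3::nat} \<union> ?C" by auto
    have e3: "(?A \<times> {3::nat} \<union> ?C) \<union> (?B \<times> {3::nat}) = (Inl -` (S \<union> T)) \<times> {3::nat} \<union> ?C" by auto
    have e4: "(?A \<times> {3::nat} \<union> ?C) \<inter> (?B \<times> {3::nat}) = (Inl -` (S \<inter> T)) \<times> {3::nat}" by auto
    have e5: "(?A \<times> {3::nat}) \<union> (?B \<times> {3::nat} \<union> ?C) = (Inl -` (S \<union> T)) \<times> {3::nat} \<union> ?C" by auto
    have e6: "(?A \<times> {3::nat}) \<inter> (?B \<times> {3::nat} \<union> ?C) = (Inl -` (S \<inter> T)) \<times> {3::nat}" by auto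
    have e7: "(?A \<times> {3::nat}) \<union> (?B \<times> {3::nat}) = (Inl -` (S \<union> T)) \<times> {3::nat}" by auto
    have e8: "(?A \<times> {3::nat}) \<inter> (?B \<times> {3::nat}) = (Inl -` (S \<inter> T)) \<times> {3::nat}" by auto
    show "hh X Y (S \<union> T) + hh X Y (S \<inter> T) \<le> hh X Y S + hh X Y T"
    proof (cases "Inr 0 \<in> S"; cases "Inr 0 \<in> T")
      assume "Inr 0 \<in> S" "Inr 0 \<in> T" then show ?thesis unfolding hh_def using s1 e1 e2 by simp
    next
      assume "Inr 0 \<in> S" "Inr 0 \<notin> T" then show ?thesis unfolding hh_def using s2 e3 e4 by simp
    next
      assume "Inr 0 \<notin> S" "Inr 0 \<in> T" then show ?thesis unfolding hh_def using s3 e5 e6 by simp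
    next
      assume "Inr 0 \<notin> S" "Inr 0 \<notin> T" then show ?thesis unfolding hh_def using s4 e7 e8 by simp
    qed
  }
qed

lemma hCI:
  assumes "X \<subseteq> E" "Y \<subseteq> E"
  shows "CI_extension E f X Y {0} (hh X Y)"
  unfolding CI_extension_def
proof (intro conjI allI impI)
  show "finite {0::nat}" by simp
  show "polymatroid (Inl ` E \<union> Inr ` {0}) (hh X Y)" using hpoly[OF assms] .
  fix S assume "S \<subseteq> E"
  then show "hh X Y (Inl ` S) = f S" unfolding hh_def by (auto simp add: g1 vimage_image_eq inj_Inl)
next
  have "Inl -` (Inr ` {0::nat} :: ('a + nat) set) = {}" by auto
  then show "hh X Y (Inr ` {0}) = f X + f Y - f (X \<union> Y)"
    unfolding hh_def using L2[OF assms, of 1 2] by simp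
next
  have "Inl -` (Inl ` X \<union> Inr ` {0::nat} :: ('a + nat) set) = X" by auto
  then show "hh X Y (Inl ` X \<union> Inr ` {0}) = hh X Y (Inl ` X)"
    unfolding hh_def using La[OF assms] g1[OF assms(1), of 3] by (simp add: vimage_image_eq inj_Inl)
next
  have "Inl -` (Inl ` Y \<union> Inr ` {0::nat} :: ('a + nat) set) = Y" by auto
  then show "hh X Y (Inl ` Y \<union> Inr ` {0}) = hh X Y (Inl ` Y)"
    unfolding hh_def using Lb[OF assms] g1[OF assms(2), of 3] by (simp add: vimage_image_eq inj_Inl)
qed


end

theorem theorem5p1:
  fixes E :: "'a set" and f :: "'a set \<Rightarrow> real"
  assumes "polymatroid E f"
    and "admits_tensor_product E f U23_ground U23_rank"
  shows "one_CI E f"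
proof -
  obtain g where g: "is_tensor_product E f U23_ground U23_rank g"
    using assms(2) unfolding admits_tensor_product_def by blast
  interpret tpctx E f g using assms(1) g by unfold_locales
  show ?thesis unfolding one_CI_def using hCI by blast
qed

end
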